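(* Let $k$ be a commutative ring, and let $A$ and $B$ be Frobenius algebras over $k$ with Frobenius coordinates $(\phi,x_i,y_i)$ and $(\psi,z_j,w_j)$ respectively. Suppose $B$ is a subalgebra of $A$, $A_B$ is projective, and the Nakayama automorphism $\eta_A$ of $A$ satisfies $\eta_A(B)=B$. Then $A/B$ is a $\beta$-Frobenius extension with $\beta=\eta_B\circ\eta_A^{-1}|_B$ (where $\eta_B$ is the Nakayama automorphism of $B$), and a $\beta$-Frobenius homomorphism is given by $F(a)=\sum_j\phi(az_j)w_j$ for $a\in A$; i.e. $a\mapsto F(a\,\cdot)$ is a $B$-$A$-bimodule isomorphism $A\to{}_\beta\mathrm{Hom}_B(A_B,B_B)$.
   Context: Frobenius coordinates $(\phi,x_i,y_i)$ for a $k$-algebra $A$ (finitely generated projective over $k$): $\phi\in\mathrm{Hom}_k(A,k)$ and finitely many $x_i,y_i\in A$ with $\sum_ix_i\phi(y_ia)=a=\sum_i\phi(ax_i)y_i$ for all $a\in A$. The Nakayama automorphism $\eta_A$ (relative to $\phi$) is defined by $\phi(\eta_A(a)x)=\phi(xa)$ for all $a,x\in A$; similarly $\eta_B$ relative to $\psi$. For an automorphism $\beta$ of $B$, $A/B$ is a $\beta$-Frobenius extension if $A_B$ is finitely generated projective and $A\cong{}_\beta\mathrm{Hom}_B(A_B,B_B)$ as $B$-$A$-bimodules, where $(b\cdot\chi\cdot a)(x)=\beta(b)\chi(ax)$. *)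

theory Defs
  imports Main
begin

text \<open>A k-algebra A is modelled as a type 'a of class ring_1 together with a ring
  homomorphism iota from the commutative ring k (type 'k) into the centre of A.
  The k-module structure is c . a = iota c * a.\<close>

definition k_algebra :: "('k::comm_ring_1 \<Rightarrow> 'a::ring_1) \<Rightarrow> bool" where
  "k_algebra \<iota> \<longleftrightarrow> \<iota> 1 = 1 \<and> (\<forall>c d. \<iota> (c + d) = \<iota> c + \<iota> d)
     \<and> (\<forall>c d. \<iota> (c * d) = \<iota> c * \<iota> d) \<and> (\<forall>c a. \<iota> c * a = a * \<iota> c)"

definition subalgebra :: "('k::comm_ring_1 \<Rightarrow> 'a::ring_1) \<Rightarrow> 'a set \<Rightarrow> bool" where
  "subalgebra \<iota> B \<longleftrightarrow> 1 \<in> B \<and> (\<forall>c. \<iota> c \<in> B)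
     \<and> (\<forall>a\<in>B. \<forall>b\<in>B. a + b \<in> B \<and> a * b \<in> B \<and> - a \<in> B)"

definition k_linear_on :: "('k::comm_ring_1 \<Rightarrow> 'a::ring_1) \<Rightarrow> 'a set \<Rightarrow> ('a \<Rightarrow> 'k) \<Rightarrow> bool" where
  "k_linear_on \<iota> S f \<longleftrightarrow> (\<forall>a\<in>S. \<forall>b\<in>S. f (a + b) = f a + f b)
     \<and> (\<forall>c. \<forall>a\<in>S. f (\<iota> c * a) = c * f a)"

text \<open>Frobenius coordinates (phi, x_i, y_i), i < n, for the k-algebra S
  (S = UNIV for A itself, S = B for a subalgebra):
  sum_i x_i phi(y_i a) = a = sum_i phi(a x_i) y_i for all a in S.\<close>
definition frobenius_coords ::
  "('k::comm_ring_1 \<Rightarrow> 'a::ring_1) \<Rightarrow> 'a set \<Rightarrow> ('a \<Rightarrow> 'k) \<Rightarrow> (nat \<Rightarrow> 'a) \<Rightarrow> (nat \<Rightarrow> 'a) \<Rightarrow> nat \<Rightarrow> bool" where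
  "frobenius_coords \<iota> S \<phi> x y n \<longleftrightarrow> k_linear_on \<iota> S \<phi> \<and> (\<forall>i<n. x i \<in> S \<and> y i \<in> S)
     \<and> (\<forall>a\<in>S. (\<Sum>i<n. x i * \<iota> (\<phi> (y i * a))) = a \<and> (\<Sum>i<n. \<iota> (\<phi> (a * x i)) * y i) = a)"

definition nakayama_on :: "'a::ring_1 set \<Rightarrow> ('a \<Rightarrow> 'k) \<Rightarrow> 'a \<Rightarrow> 'a" where
  "nakayama_on S \<phi> a = (THE e. e \<in> S \<and> (\<forall>x\<in>S. \<phi> (e * x) = \<phi> (x * a)))"

definition right_B_linear :: "'a::ring_1 set \<Rightarrow> ('a \<Rightarrow> 'a) \<Rightarrow> bool" where
  "right_B_linear B f \<longleftrightarrow> (\<forall>a. f a \<in> B) \<and> (\<forall>a a'. f (a + a') = f a + f a')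
     \<and> (\<forall>a. \<forall>b\<in>B. f (a * b) = f a * b)"

definition hom_right :: "'a::ring_1 set \<Rightarrow> ('a \<Rightarrow> 'a) set" where
  "hom_right B = {f. right_B_linear B f}"

text \<open>A_B is projective: the canonical epimorphism from the free right B-module on the
  set A (basis e_x, x in A, e_x \<mapsto> x) splits by a right B-linear section
  a \<mapsto> sum_x e_x f_x(a).\<close>
definition projective_right :: "'a::ring_1 set \<Rightarrow> bool" where
  "projective_right B \<longleftrightarrow> (\<exists>f :: 'a \<Rightarrow> 'a \<Rightarrow> 'a. (\<forall>x. right_B_linear B (f x))
     \<and> (\<forall>a. finite {x. f x a \<noteq> 0}) \<and> (\<forall>a. (\<Sum>x\<in>{x. f x a \<noteq> 0}. x * f x a) = a))"

text \<open>A_B is finitely generated projective: a direct summand of B^n_B, i.e. the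
  epimorphism B^n \<rightarrow> A, (b_i) \<mapsto> sum g_i b_i, splits by a right B-linear section.\<close>
definition fg_projective_right :: "'a::ring_1 set \<Rightarrow> bool" where
  "fg_projective_right B \<longleftrightarrow> (\<exists>(n::nat) (g :: nat \<Rightarrow> 'a) (f :: nat \<Rightarrow> 'a \<Rightarrow> 'a).
     (\<forall>i<n. right_B_linear B (f i)) \<and> (\<forall>a. (\<Sum>i<n. g i * f i a) = a))"

definition ring_aut_on :: "'a::ring_1 set \<Rightarrow> ('a \<Rightarrow> 'a) \<Rightarrow> bool" where
  "ring_aut_on B \<beta> \<longleftrightarrow> bij_betw \<beta> B B \<and> \<beta> 1 = 1
     \<and> (\<forall>a\<in>B. \<forall>b\<in>B. \<beta> (a + b) = \<beta> a + \<beta> b \<and> \<beta> (a * b) = \<beta> a * \<beta> b)"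

text \<open>Phi : A \<rightarrow> _beta Hom_B(A_B,B_B) is an isomorphism of B-A-bimodules, where
  (b . chi . a)(x) = beta(b) chi(a x).\<close>
definition bimod_iso_twisted_dual :: "'a::ring_1 set \<Rightarrow> ('a \<Rightarrow> 'a) \<Rightarrow> ('a \<Rightarrow> 'a \<Rightarrow> 'a) \<Rightarrow> bool" where
  "bimod_iso_twisted_dual B \<beta> \<Phi> \<longleftrightarrow> bij_betw \<Phi> UNIV (hom_right B)
     \<and> (\<forall>a a'. \<Phi> (a + a') = (\<lambda>t. \<Phi> a t + \<Phi> a' t))
     \<and> (\<forall>b\<in>B. \<forall>a a'. \<Phi> (b * a * a') = (\<lambda>t. \<beta> b * \<Phi> a (a' * t)))"

definition beta_frobenius_ext :: "'a::ring_1 set \<Rightarrow> ('a \<Rightarrow> 'a) \<Rightarrow> bool" where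
  "beta_frobenius_ext B \<beta> \<longleftrightarrow> fg_projective_right B \<and> ring_aut_on B \<beta>
     \<and> (\<exists>\<Phi>. bimod_iso_twisted_dual B \<beta> \<Phi>)"

end

theory Submission
  imports Defs
begin

locale frob =
  fixes \<iota> :: "'k::comm_ring_1 \<Rightarrow> 'a::ring_1" and S :: "'a set"
    and \<phi> :: "'a \<Rightarrow> 'k" and x y :: "nat \<Rightarrow> 'a" and n :: nat
  assumes alg: "k_algebra \<iota>" and sub: "subalgebra \<iota> S"
    and fc: "frobenius_coords \<iota> S \<phi> x y n"
begin

lemma iota_central: "\<iota> c * a = a * \<iota> c" using alg unfolding k_algebra_def by blast
lemma iota_add: "\<iota> (c + d) = \<iota> c + \<iota> d" using alg unfolding k_algebra_def by blast
lemma iota_mult: "\<iota> (c * d) = \<iota> c * \<iota> d" using alg unfolding k_algebra_def by blast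
lemma iota_one: "\<iota> 1 = 1" using alg unfolding k_algebra_def by blast
lemma iota_swap1: "a * \<iota> c * b = \<iota> c * (a * b)"
  by (metis iota_central mult.assoc)
lemma iota_swap2: "a * (b * \<iota> c) = \<iota> c * (a * b)"
  by (metis iota_central mult.assoc)
lemma iota_zero: "\<iota> 0 = 0" by (metis add_cancel_right_right add_0 iota_add)

lemma S_one: "1 \<in> S" using sub by (simp add: subalgebra_def)
lemma S_iota: "\<iota> c \<in> S" using sub by (simp add: subalgebra_def)
lemma S_add: "a \<in> S \<Longrightarrow> b \<in> S \<Longrightarrow> a + b \<in> S" using sub by (simp add: subalgebra_def)
lemma S_mult: "a \<in> S \<Longrightarrow> b \<in> S \<Longrightarrow> a * b \<in> S" using sub by (simp add: subalgebra_def)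
lemma S_uminus: "a \<in> S \<Longrightarrow> - a \<in> S" using sub by (simp add: subalgebra_def)
lemma S_zero: "0 \<in> S" using S_add[OF S_one S_uminus[OF S_one]] by simp
lemma S_sum: "(\<And>i. i \<in> I \<Longrightarrow> f i \<in> S) \<Longrightarrow> sum f I \<in> S"
proof (cases "finite I")
  case True
  assume "\<And>i. i \<in> I \<Longrightarrow> f i \<in> S"
  with True show ?thesis by (induction I rule: finite_induct) (auto intro: S_add S_zero)
qed (simp add: S_zero)

lemma x_in: "x i \<in> S" if "i < n" using fc that by (simp add: frobenius_coords_def)
lemma y_in: "y i \<in> S" if "i < n" using fc that by (simp add: frobenius_coords_def)

lemma phi_add: "a \<in> S \<Longrightarrow> b \<in> S \<Longrightarrow> \<phi> (a + b) = \<phi> a + \<phi> b"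
  using fc by (simp add: frobenius_coords_def k_linear_on_def)
lemma phi_scal: "a \<in> S \<Longrightarrow> \<phi> (\<iota> c * a) = c * \<phi> a"
  using fc by (simp add: frobenius_coords_def k_linear_on_def)
lemma phi_scal': "a \<in> S \<Longrightarrow> \<phi> (a * \<iota> c) = c * \<phi> a"
  using phi_scal[of a c] by (simp add: iota_central)
lemma phi_zero: "\<phi> 0 = 0" by (metis add_cancel_right_right add_0 phi_add S_zero)
lemma phi_sum: "(\<And>i. i \<in> I \<Longrightarrow> f i \<in> S) \<Longrightarrow> \<phi> (sum f I) = (\<Sum>i\<in>I. \<phi> (f i))"
proof (cases "finite I")
  case True
  assume "\<And>i. i \<in> I \<Longrightarrow> f i \<in> S"
  with True show ?thesis
    by (induction I rule: finite_induct) (auto simp: phi_zero phi_add S_sum)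
qed (simp add: phi_zero)

lemma expand_left: "a \<in> S \<Longrightarrow> (\<Sum>i<n. x i * \<iota> (\<phi> (y i * a))) = a"
  using fc by (simp add: frobenius_coords_def)
lemma expand_right: "a \<in> S \<Longrightarrow> (\<Sum>i<n. \<iota> (\<phi> (a * x i)) * y i) = a"
  using fc by (simp add: frobenius_coords_def)

lemma uniq_left:
  assumes "e \<in> S" "e' \<in> S" "\<And>t. t \<in> S \<Longrightarrow> \<phi> (e * t) = \<phi> (e' * t)"
  shows "e = e'"
proof -
  have "e = (\<Sum>i<n. \<iota> (\<phi> (e * x i)) * y i)" using expand_right[OF assms(1)] by simp
  also have "\<dots> = (\<Sum>i<n. \<iota> (\<phi> (e' * x i)) * y i)"
    by (rule sum.cong) (auto simp: assms(3) x_in)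
  also have "\<dots> = e'" using expand_right[OF assms(2)] by simp
  finally show ?thesis .
qed

lemma uniq_right:
  assumes "e \<in> S" "e' \<in> S" "\<And>t. t \<in> S \<Longrightarrow> \<phi> (t * e) = \<phi> (t * e')"
  shows "e = e'"
proof -
  have "e = (\<Sum>i<n. x i * \<iota> (\<phi> (y i * e)))" using expand_left[OF assms(1)] by simp
  also have "\<dots> = (\<Sum>i<n. x i * \<iota> (\<phi> (y i * e')))"
    by (rule sum.cong) (auto simp: assms(3) y_in)
  also have "\<dots> = e'" using expand_left[OF assms(2)] by simp
  finally show ?thesis .
qed

lemma nak_ex:
  assumes a: "a \<in> S"
  shows "\<exists>!e. e \<in> S \<and> (\<forall>t\<in>S. \<phi> (e * t) = \<phi> (t * a))"
proof -
  define e where "e = (\<Sum>i<n. \<iota> (\<phi> (x i * a)) * y i)"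
  have eS: "e \<in> S" unfolding e_def by (intro S_sum S_mult S_iota y_in) simp
  have "\<phi> (e * t) = \<phi> (t * a)" if t: "t \<in> S" for t
  proof -
    have "\<phi> (e * t) = \<phi> (\<Sum>i<n. \<iota> (\<phi> (x i * a)) * (y i * t))"
      unfolding e_def by (simp add: sum_distrib_right mult.assoc)
    also have "\<dots> = (\<Sum>i<n. \<phi> (x i * a) * \<phi> (y i * t))"
      by (subst phi_sum) (auto intro!: sum.cong S_mult S_iota y_in x_in t simp: phi_scal S_mult x_in y_in t a)
    finally have 1: "\<phi> (e * t) = (\<Sum>i<n. \<phi> (x i * a) * \<phi> (y i * t))" .
    have "\<phi> (t * a) = \<phi> ((\<Sum>i<n. x i * \<iota> (\<phi> (y i * t))) * a)"
      using expand_left[OF t] by simp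
    also have "\<dots> = \<phi> (\<Sum>i<n. \<iota> (\<phi> (y i * t)) * (x i * a))"
      by (simp add: sum_distrib_right iota_swap1)
    also have "\<dots> = (\<Sum>i<n. \<phi> (y i * t) * \<phi> (x i * a))"
      by (subst phi_sum) (auto intro!: sum.cong S_mult S_iota y_in x_in t a simp: phi_scal S_mult x_in y_in t a)
    finally show ?thesis using 1 by (simp add: mult.commute)
  qed
  with eS show ?thesis
    by (intro ex1I[of _ e]) (auto intro: uniq_left)
qed

abbreviation "\<eta> \<equiv> nakayama_on S \<phi>"

lemma nak: assumes "a \<in> S" shows "\<eta> a \<in> S" "\<And>t. t \<in> S \<Longrightarrow> \<phi> (\<eta> a * t) = \<phi> (t * a)"
  using theI'[OF nak_ex[OF assms]] unfolding nakayama_on_def by auto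

lemma nak_char: "a \<in> S \<Longrightarrow> e \<in> S \<Longrightarrow> (\<And>t. t \<in> S \<Longrightarrow> \<phi> (e * t) = \<phi> (t * a)) \<Longrightarrow> \<eta> a = e"
  by (rule uniq_left) (auto simp: nak)

lemma nak_inj: assumes "a \<in> S" "a' \<in> S" "\<eta> a = \<eta> a'" shows "a = a'"
proof (rule uniq_right[OF assms(1,2)])
  fix t assume t: "t \<in> S"
  have "\<phi> (t * a) = \<phi> (\<eta> a * t)" using nak(2)[OF assms(1) t] by (rule sym)
  also have "\<dots> = \<phi> (\<eta> a' * t)" using assms(3) by (rule arg_cong)
  also have "\<dots> = \<phi> (t * a')" using nak(2)[OF assms(2) t] .
  finally show "\<phi> (t * a) = \<phi> (t * a')" .
qed

lemma nak_surj: assumes a: "a \<in> S" shows "\<exists>e\<in>S. \<eta> e = a"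
proof -
  define e where "e = (\<Sum>i<n. x i * \<iota> (\<phi> (a * y i)))"
  have eS: "e \<in> S" unfolding e_def by (intro S_sum S_mult S_iota x_in) simp
  have "\<phi> (a * t) = \<phi> (t * e)" if t: "t \<in> S" for t
  proof -
    have "\<phi> (t * e) = \<phi> (\<Sum>i<n. \<iota> (\<phi> (a * y i)) * (t * x i))"
      unfolding e_def by (simp add: sum_distrib_left iota_swap2)
    also have "\<dots> = (\<Sum>i<n. \<phi> (a * y i) * \<phi> (t * x i))"
      by (subst phi_sum) (auto intro!: sum.cong S_mult S_iota y_in x_in t simp: phi_scal S_mult x_in y_in t a)
    finally have 1: "\<phi> (t * e) = (\<Sum>i<n. \<phi> (a * y i) * \<phi> (t * x i))" .
    have "\<phi> (a * t) = \<phi> (a * (\<Sum>i<n. \<iota> (\<phi> (t * x i)) * y i))"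
      using expand_right[OF t] by simp
    also have "\<dots> = \<phi> (\<Sum>i<n. \<iota> (\<phi> (t * x i)) * (a * y i))"
      by (simp add: sum_distrib_left mult.assoc[symmetric] iota_swap1)
    also have "\<dots> = (\<Sum>i<n. \<phi> (t * x i) * \<phi> (a * y i))"
      by (subst phi_sum) (auto intro!: sum.cong S_mult S_iota y_in x_in t a simp: phi_scal S_mult x_in y_in t a)
    finally show ?thesis using 1 by (simp add: mult.commute)
  qed
  then have "\<eta> e = a" using nak_char[OF eS a] by (metis)
  with eS show ?thesis by blast
qed

lemma nak_one: "\<eta> 1 = 1"
proof (rule nak_char)
  show "1 \<in> S" "1 \<in> S" by (rule S_one)+
  fix t assume "t \<in> S" show "\<phi> (1 * t) = \<phi> (t * 1)" by simp
qed

lemma nak_add: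
  assumes a: "a \<in> S" and b: "b \<in> S"
  shows "\<eta> (a + b) = \<eta> a + \<eta> b"
proof (rule nak_char)
  show "a + b \<in> S" using a b by (rule S_add)
  show "\<eta> a + \<eta> b \<in> S" using nak(1)[OF a] nak(1)[OF b] by (rule S_add)
  fix t assume t: "t \<in> S"
  have 1: "\<eta> a * t \<in> S" "\<eta> b * t \<in> S" "t * a \<in> S" "t * b \<in> S"
    using S_mult nak(1) a b t by auto
  have "\<phi> ((\<eta> a + \<eta> b) * t) = \<phi> (\<eta> a * t) + \<phi> (\<eta> b * t)"
    using 1 by (simp only: distrib_right phi_add)
  also have "\<dots> = \<phi> (t * a) + \<phi> (t * b)" using nak(2)[OF a t] nak(2)[OF b t] by simp
  also have "\<dots> = \<phi> (t * (a + b))" using 1 by (simp only: distrib_left phi_add)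
  finally show "\<phi> ((\<eta> a + \<eta> b) * t) = \<phi> (t * (a + b))" .
qed

lemma nak_mult:
  assumes a: "a \<in> S" and b: "b \<in> S"
  shows "\<eta> (a * b) = \<eta> a * \<eta> b"
proof (rule nak_char)
  show "a * b \<in> S" using a b by (rule S_mult)
  show "\<eta> a * \<eta> b \<in> S" using nak(1)[OF a] nak(1)[OF b] by (rule S_mult)
  fix t assume t: "t \<in> S"
  have 1: "\<eta> b * t \<in> S" "t * a \<in> S"
    using S_mult nak(1) a b t by auto
  have "\<phi> (\<eta> a * \<eta> b * t) = \<phi> (\<eta> a * (\<eta> b * t))" by (simp only: mult.assoc)
  also have "\<dots> = \<phi> (\<eta> b * t * a)" using nak(2)[OF a 1(1)] .
  also have "\<dots> = \<phi> (\<eta> b * (t * a))" by (simp only: mult.assoc)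
  also have "\<dots> = \<phi> (t * a * b)" using nak(2)[OF b 1(2)] .
  finally show "\<phi> (\<eta> a * \<eta> b * t) = \<phi> (t * (a * b))" by (simp only: mult.assoc)
qed


lemma rl_zero: assumes "right_B_linear S f" shows "f 0 = 0"
proof -
  have "f (0 + 0) = f 0 + f 0" using assms unfolding right_B_linear_def by blast
  then show ?thesis by (metis add_cancel_right_right add_0)
qed

lemma rl_add: "right_B_linear S f \<Longrightarrow> f (a + b) = f a + f b"
  unfolding right_B_linear_def by blast

lemma rl_in: "right_B_linear S f \<Longrightarrow> f a \<in> S"
  unfolding right_B_linear_def by blast

lemma rl_mult: "right_B_linear S f \<Longrightarrow> b \<in> S \<Longrightarrow> f (a * b) = f a * b"
  unfolding right_B_linear_def by blast

lemma rl_sum: assumes "right_B_linear S f" shows "f (sum g I) = (\<Sum>i\<in>I. f (g i))"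
proof (cases "finite I")
  case True
  then show ?thesis
    by (induction I rule: finite_induct) (simp_all add: rl_zero[OF assms] rl_add[OF assms])
qed (simp add: rl_zero[OF assms])

lemma rl_iota: "right_B_linear S f \<Longrightarrow> f (t * \<iota> c) = f t * \<iota> c"
  by (rule rl_mult) (auto intro: S_iota)

end


theorem mainTheorem13:
  fixes \<iota> :: "'k::comm_ring_1 \<Rightarrow> 'a::ring_1"
    and B :: "'a set"
    and \<phi> \<psi> :: "'a \<Rightarrow> 'k"
    and x y z w :: "nat \<Rightarrow> 'a"
    and n m :: nat
  assumes "k_algebra \<iota>"
    and "frobenius_coords \<iota> UNIV \<phi> x y n"
    and "subalgebra \<iota> B"
    and "frobenius_coords \<iota> B \<psi> z w m"
    and "projective_right B"
    and "nakayama_on UNIV \<phi> ` B = B"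
  shows "let \<eta>A = nakayama_on UNIV \<phi>; \<eta>B = nakayama_on B \<psi>;
             \<beta> = (\<lambda>b. \<eta>B (inv \<eta>A b));
             F = (\<lambda>a. \<Sum>j<m. \<iota> (\<phi> (a * z j)) * w j)
         in beta_frobenius_ext B \<beta> \<and> bimod_iso_twisted_dual B \<beta> (\<lambda>a t. F (a * t))"
proof -
  interpret A: frob \<iota> UNIV \<phi> x y n
    using assms(1,2) unfolding frob_def subalgebra_def by blast
  interpret Bf: frob \<iota> B \<psi> z w m
    using assms(1,3,4) unfolding frob_def by blast
  define \<eta>A where "\<eta>A = nakayama_on UNIV \<phi>"
  define \<eta>B where "\<eta>B = nakayama_on B \<psi>"
  define \<beta> where "\<beta> = (\<lambda>b. \<eta>B (inv \<eta>A b))"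
  define F where "F = (\<lambda>a. \<Sum>j<m. \<iota> (\<phi> (a * z j)) * w j)"
  define \<Phi> where "\<Phi> = (\<lambda>a t. F (a * t))"
  have injA: "inj \<eta>A" unfolding \<eta>A_def inj_def using A.nak_inj by blast
  have surjA: "surj \<eta>A" unfolding \<eta>A_def using A.nak_surj by (metis UNIV_I surjI)
  have ff: "\<eta>A (inv \<eta>A b) = b" for b by (rule surj_f_inv_f[OF surjA])
  have fi: "inv \<eta>A (\<eta>A u) = u" for u by (rule inv_f_f[OF injA])
  have natA: "\<phi> (\<eta>A u * t) = \<phi> (t * u)" for u t unfolding \<eta>A_def using A.nak(2) by simp
  have invB: "inv \<eta>A b \<in> B" if "b \<in> B" for b
  proof -
    from that assms(6) obtain u where "u \<in> B" "b = \<eta>A u" unfolding \<eta>A_def by blast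
    then show ?thesis using fi by simp
  qed
  have FB: "F a \<in> B" for a
    unfolding F_def by (intro Bf.S_sum Bf.S_mult Bf.S_iota Bf.y_in) simp
  have Fchar: "\<psi> (F a * c) = \<phi> (a * c)" if c: "c \<in> B" for a c
  proof -
    have "\<psi> (F a * c) = \<psi> (\<Sum>j<m. \<iota> (\<phi> (a * z j)) * (w j * c))"
      unfolding F_def by (simp add: sum_distrib_right mult.assoc)
    also have "\<dots> = (\<Sum>j<m. \<phi> (a * z j) * \<psi> (w j * c))"
      by (subst Bf.phi_sum) (auto intro!: sum.cong Bf.S_mult Bf.S_iota Bf.y_in c
          simp: Bf.phi_scal Bf.S_mult Bf.y_in c)
    finally have 1: "\<psi> (F a * c) = (\<Sum>j<m. \<phi> (a * z j) * \<psi> (w j * c))" .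
    have "\<phi> (a * c) = \<phi> (a * (\<Sum>j<m. z j * \<iota> (\<psi> (w j * c))))"
      using Bf.expand_left[OF c] by simp
    also have "\<dots> = \<phi> (\<Sum>j<m. \<iota> (\<psi> (w j * c)) * (a * z j))"
      by (simp add: sum_distrib_left A.iota_swap2)
    also have "\<dots> = (\<Sum>j<m. \<psi> (w j * c) * \<phi> (a * z j))"
      by (subst A.phi_sum) (auto intro!: sum.cong simp: A.phi_scal)
    finally show ?thesis using 1 by (simp add: mult.commute)
  qed
  have Fchar1: "\<psi> (F a) = \<phi> a" for a using Fchar[OF Bf.S_one, of a] by simp
  have F_eq: "F a = d" if d: "d \<in> B" and h: "\<And>c. c \<in> B \<Longrightarrow> \<psi> (d * c) = \<phi> (a * c)" for a d
    by (rule Bf.uniq_left[OF FB d]) (simp add: Fchar h)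
  have F_right: "F (a * b) = F a * b" if b: "b \<in> B" for a b
  proof (rule F_eq)
    show "F a * b \<in> B" using FB b by (rule Bf.S_mult)
    fix c assume c: "c \<in> B"
    have "\<psi> (F a * b * c) = \<psi> (F a * (b * c))" by (simp add: mult.assoc)
    also have "\<dots> = \<phi> (a * (b * c))" using Fchar Bf.S_mult b c by blast
    finally show "\<psi> (F a * b * c) = \<phi> (a * b * c)" by (simp add: mult.assoc)
  qed
  have F_add: "F (a + a') = F a + F a'" for a a'
    unfolding F_def by (simp add: distrib_right A.phi_add A.iota_add sum.distrib)
  have F_left: "F (b * a) = \<beta> b * F a" if b: "b \<in> B" for a b
  proof -
    define u where "u = inv \<eta>A b"
    have u: "u \<in> B" "\<eta>A u = b" "\<beta> b = \<eta>B u"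
      unfolding u_def \<beta>_def using invB[OF b] ff by auto
    show ?thesis
    proof (rule F_eq)
      show "\<beta> b * F a \<in> B" unfolding u(3) \<eta>B_def using Bf.nak(1)[OF u(1)] FB by (rule Bf.S_mult)
      fix c assume c: "c \<in> B"
      have "\<psi> (\<eta>B u * F a * c) = \<psi> (\<eta>B u * (F a * c))" by (simp add: mult.assoc)
      also have "\<dots> = \<psi> (F a * c * u)" unfolding \<eta>B_def
        using Bf.nak(2)[OF u(1)] Bf.S_mult FB c by blast
      also have "\<dots> = \<psi> (F a * (c * u))" by (simp add: mult.assoc)
      also have "\<dots> = \<phi> (a * (c * u))" using Fchar Bf.S_mult u(1) c by blast
      also have "\<dots> = \<phi> (\<eta>A u * (a * c))" using natA by (simp add: mult.assoc)
      finally show "\<psi> (\<beta> b * F a * c) = \<phi> (b * a * c)" using u by (simp add: mult.assoc)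
    qed
  qed
  have rlPhi: "right_B_linear B (\<Phi> a)" for a
    unfolding right_B_linear_def \<Phi>_def
    by (simp add: FB distrib_left F_add F_right mult.assoc[symmetric])
  have injPhi: "inj \<Phi>"
  proof (rule injI)
    fix a a' assume h: "\<Phi> a = \<Phi> a'"
    show "a = a'"
    proof (rule A.uniq_left)
      fix t
      have "\<phi> (a * t) = \<psi> (\<Phi> a t)" unfolding \<Phi>_def by (simp add: Fchar1)
      also have "\<dots> = \<psi> (\<Phi> a' t)" using h by simp
      also have "\<dots> = \<phi> (a' * t)" unfolding \<Phi>_def by (simp add: Fchar1)
      finally show "\<phi> (a * t) = \<phi> (a' * t)" .
    qed auto
  qed
  have surjPhi: "\<chi> \<in> range \<Phi>" if "\<chi> \<in> hom_right B" for \<chi>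
  proof -
    have rl: "right_B_linear B \<chi>" using that unfolding hom_right_def by simp
    define \<theta> where "\<theta> t = \<psi> (\<chi> t)" for t
    define a where "a = (\<Sum>i<n. \<iota> (\<theta> (x i)) * y i)"
    have key: "\<phi> (a * t) = \<theta> t" for t
    proof -
      have "\<phi> (a * t) = \<phi> (\<Sum>i<n. \<iota> (\<theta> (x i)) * (y i * t))"
        unfolding a_def by (simp add: sum_distrib_right mult.assoc)
      also have "\<dots> = (\<Sum>i<n. \<theta> (x i) * \<phi> (y i * t))"
        by (subst A.phi_sum) (auto intro!: sum.cong simp: A.phi_scal)
      finally have 1: "\<phi> (a * t) = (\<Sum>i<n. \<theta> (x i) * \<phi> (y i * t))" .
      have "\<theta> t = \<psi> (\<chi> (\<Sum>i<n. x i * \<iota> (\<phi> (y i * t))))"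
        unfolding \<theta>_def using A.expand_left[of t] by simp
      also have "\<dots> = \<psi> (\<Sum>i<n. \<chi> (x i) * \<iota> (\<phi> (y i * t)))"
        by (simp add: Bf.rl_sum[OF rl] Bf.rl_iota[OF rl])
      also have "\<dots> = (\<Sum>i<n. \<phi> (y i * t) * \<theta> (x i))"
        unfolding \<theta>_def
        by (subst Bf.phi_sum) (auto intro!: sum.cong Bf.S_mult Bf.S_iota Bf.rl_in[OF rl]
           simp: Bf.phi_scal' Bf.rl_in[OF rl])
      finally show ?thesis using 1 by (simp add: mult.commute)
    qed
    have "\<chi> = \<Phi> a"
    proof
      fix t
      show "\<chi> t = \<Phi> a t" unfolding \<Phi>_def
      proof (rule F_eq[symmetric])
        show "\<chi> t \<in> B" by (rule Bf.rl_in[OF rl])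
        fix c assume c: "c \<in> B"
        have "\<psi> (\<chi> t * c) = \<theta> (t * c)" unfolding \<theta>_def using Bf.rl_mult[OF rl c] by simp
        also have "\<dots> = \<phi> (a * t * c)" using key[of "t * c"] by (simp add: mult.assoc)
        finally show "\<psi> (\<chi> t * c) = \<phi> (a * t * c)" .
      qed
    qed
    then show ?thesis by blast
  qed
  have bijPhi: "bij_betw \<Phi> UNIV (hom_right B)"
    unfolding bij_betw_def using injPhi surjPhi rlPhi
    by (auto simp: hom_right_def)
  have bimod: "bimod_iso_twisted_dual B \<beta> \<Phi>"
    unfolding bimod_iso_twisted_dual_def
  proof (intro conjI allI ballI bijPhi)
    fix a a' show "\<Phi> (a + a') = (\<lambda>t. \<Phi> a t + \<Phi> a' t)"
      unfolding \<Phi>_def by (simp add: distrib_right F_add)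
  next
    fix b a a' assume b: "b \<in> B"
    show "\<Phi> (b * a * a') = (\<lambda>t. \<beta> b * \<Phi> a (a' * t))"
      unfolding \<Phi>_def using F_left[OF b] by (simp add: mult.assoc)
  qed
  have aut: "ring_aut_on B \<beta>"
  proof -
    have \<beta>B: "\<beta> b \<in> B" if "b \<in> B" for b
      unfolding \<beta>_def \<eta>B_def using Bf.nak(1) invB that by blast
    have injb: "inj_on \<beta> B"
    proof
      fix b b' assume b: "b \<in> B" and b': "b' \<in> B" and h: "\<beta> b = \<beta> b'"
      then have "inv \<eta>A b = inv \<eta>A b'"
        unfolding \<beta>_def \<eta>B_def using Bf.nak_inj invB by blast
      then show "b = b'" using ff by metis
    qed
    have imb: "\<beta> ` B = B"
    proof
      show "\<beta> ` B \<subseteq> B" using \<beta>B by blast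
      show "B \<subseteq> \<beta> ` B"
      proof
        fix c assume c: "c \<in> B"
        then obtain u where u: "u \<in> B" "\<eta>B u = c" unfolding \<eta>B_def using Bf.nak_surj by blast
        have "\<eta>A u \<in> B" using assms(6) u(1) unfolding \<eta>A_def by blast
        moreover have "\<beta> (\<eta>A u) = c" unfolding \<beta>_def using fi u by simp
        ultimately show "c \<in> \<beta> ` B" by blast
      qed
    qed
    have one: "\<beta> 1 = 1"
    proof -
      have "\<eta>A 1 = 1" unfolding \<eta>A_def by (rule A.nak_one)
      then have "inv \<eta>A 1 = 1" using fi by metis
      then show ?thesis unfolding \<beta>_def \<eta>B_def using Bf.nak_one by simp
    qed
    have hom: "\<beta> (a + b) = \<beta> a + \<beta> b \<and> \<beta> (a * b) = \<beta> a * \<beta> b" if a: "a \<in> B" and b: "b \<in> B" for a b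
    proof -
      have "\<eta>A (inv \<eta>A a + inv \<eta>A b) = a + b" unfolding \<eta>A_def
        using A.nak_add[of "inv \<eta>A a" "inv \<eta>A b"] ff unfolding \<eta>A_def by simp
      then have 1: "inv \<eta>A (a + b) = inv \<eta>A a + inv \<eta>A b" using fi by metis
      have "\<eta>A (inv \<eta>A a * inv \<eta>A b) = a * b" unfolding \<eta>A_def
        using A.nak_mult[of "inv \<eta>A a" "inv \<eta>A b"] ff unfolding \<eta>A_def by simp
      then have 2: "inv \<eta>A (a * b) = inv \<eta>A a * inv \<eta>A b" using fi by metis
      show ?thesis unfolding \<beta>_def 1 2 \<eta>B_def
        using Bf.nak_add Bf.nak_mult invB a b by simp
    qed
    show ?thesis unfolding ring_aut_on_def bij_betw_def using injb imb one hom by blast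
  qed
  have fg: "fg_projective_right B"
  proof -
    from assms(5) obtain f :: "'a \<Rightarrow> 'a \<Rightarrow> 'a" where
      f1: "\<And>u. right_B_linear B (f u)" and f2: "\<And>a. finite {u. f u a \<noteq> 0}"
      and f3: "\<And>a. (\<Sum>u\<in>{u. f u a \<noteq> 0}. u * f u a) = a"
      unfolding projective_right_def by blast
    define X where "X = (\<Union>i<n. {u. f u (x i) \<noteq> 0})"
    have finX: "finite X" unfolding X_def using f2 by blast
    have zero: "f u a = 0" if "u \<notin> X" for u a
    proof -
      have "f u a = f u (\<Sum>i<n. x i * \<iota> (\<phi> (y i * a)))" using A.expand_left[of a] by simp
      also have "\<dots> = (\<Sum>i<n. f u (x i) * \<iota> (\<phi> (y i * a)))"
        by (simp add: Bf.rl_sum[OF f1] Bf.rl_iota[OF f1])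
      also have "\<dots> = 0" using that unfolding X_def by (intro sum.neutral) auto
      finally show ?thesis .
    qed
    have sumX: "(\<Sum>u\<in>X. u * f u a) = a" for a
    proof -
      have "(\<Sum>u\<in>X. u * f u a) = (\<Sum>u\<in>{u. f u a \<noteq> 0}. u * f u a)"
        by (rule sum.mono_neutral_right[OF finX]) (use zero in auto)
      then show ?thesis using f3 by simp
    qed
    obtain h where h: "bij_betw h {0..<card X} X" using ex_bij_betw_nat_finite[OF finX] by blast
    have "(\<Sum>i<card X. h i * f (h i) a) = a" for a
      using sum.reindex_bij_betw[OF h, of "\<lambda>u. u * f u a"] sumX[of a]
      by (simp add: atLeast0LessThan)
    then show ?thesis unfolding fg_projective_right_def using f1
      by (intro exI[of _ "card X"] exI[of _ h] exI[of _ "\<lambda>i. f (h i)"]) auto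
  qed
  have "beta_frobenius_ext B \<beta> \<and> bimod_iso_twisted_dual B \<beta> \<Phi>"
    unfolding beta_frobenius_ext_def using fg aut bimod by blast
  then show ?thesis unfolding Let_def \<eta>A_def \<eta>B_def \<beta>_def \<Phi>_def F_def by simp
qed

end
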